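(* Consider Algorithm PDS-SPP described in the context, with nonnegative $\lambda_k,\tau_k$ and positive $\beta_k,p_k$, and suppose $$\tau_1=0,\quad \beta_k\tau_k\le\beta_{k-1}(\tau_{k-1}+1),\quad \beta_{k-1}=\beta_k\lambda_k,\quad \tilde L\lambda_k\le p_{k-1}\tau_k\quad\text{for all }k\ge2.$$ Let $$A=\sum_{k=1}^N\beta_k\Big[-\langle\hat x_k,y\rangle+\langle x,y_k\rangle+\langle y_k,\hat x_k-x\rangle-\tilde f^*(y_k)+\tilde f^*(y)+\frac{p_k}{T_k}\sum_{t=1}^{T_k}V(x_{k-1},x_k^t)\Big].$$ Then for all $(x,y)\in\mathcal X\times\mathcal Y$, $$A\ge-\beta_N\langle x_{N-1}-\hat x_N,y_N-y\rangle+\frac{\beta_Np_N}{2}\|x_{N-1}-\hat x_N\|^2+\beta_N(\tau_N+1)W(y_N,y).$$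
   Context: Setting. $\mathcal X$ closed convex subset of a finite-dimensional space with norm $\|\cdot\|$ (dual $\|\cdot\|_*$); $\mathcal Z$ closed convex with norm $|\cdot|$; $\mathcal A$ linear; $h$ convex on $\mathcal Z$; $\mu\ge0$; $\nu$ $1$-strongly convex on $\mathcal X$ w.r.t. $\|\cdot\|$; $\tilde f$ convex differentiable with $\nabla\tilde f$ $\tilde L$-Lipschitz w.r.t. $\|\cdot\|$; $\tilde f^*$ its conjugate, $\mathcal Y=\mathrm{dom}\,\tilde f^*$; $\zeta$ $1$-strongly convex on $\mathcal Z$ w.r.t. $|\cdot|$. $U,V,W$ are the Bregman functions of $\zeta,\nu,\tilde f^*$: e.g. $W(v,y)=\tilde f^*(y)-\tilde f^*(v)-\langle(\tilde f^* )'(v),y-v\rangle$. Algorithm PDS-SPP: $x_0\in\mathcal X$, $y_0\in\mathcal Y$, $z_0\in\mathcal Z$, $\hat x_0=x_{-1}=x_0$; for $k=1,\dots,N$: $\tilde x_k=x_{k-1}+\lambda_k(\hat x_{k-1}-x_{k-2})$, $y_k=\arg\min_{y\in\mathcal Y}\langle-\tilde x_k,y\rangle+\tilde f^*(y)+\tau_kW(y_{k-1},y)$; $x_k^0=x_{k-1}$, $z_k^0=z_{k-1}$, $x_k^{-1}=x_{k-1}^{T_{k-1}-1}$ ($x_1^{-1}=x_0$); for $t=1,\dots,T_k$: $\tilde u_k^t=x_k^{t-1}+\alpha_k^t(x_k^{t-1}-x_k^{t-2})$, $z_k^t=\arg\min_{z\in\mathcal Z}h(z)+\langle-\mathcal A\tilde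 u_k^t,z\rangle+q_k^tU(z_k^{t-1},z)$, $x_k^t=\arg\min_{x\in\mathcal X}\mu\nu(x)+\langle y_k+\mathcal A^\top z_k^t,x\rangle+\eta_k^tV(x_k^{t-1},x)+p_kV(x_{k-1},x)$; $x_k=x_k^{T_k}$, $z_k=z_k^{T_k}$, $\hat x_k=\frac1{T_k}\sum_tx_k^t$, $\hat z_k=\frac1{T_k}\sum_tz_k^t$. Here $T_k$ are positive integers and $q_k^t,\eta_k^t$ positive reals. *)

theory Defs
  imports "HOL-Analysis.Analysis"
begin

definition is_norm :: "('a::real_vector \<Rightarrow> real) \<Rightarrow> bool" where
  "is_norm n \<longleftrightarrow> (\<forall>x. n x \<ge> 0) \<and> (\<forall>x. n x = 0 \<longleftrightarrow> x = 0)
     \<and> (\<forall>c x. n (c *\<^sub>R x) = \<bar>c\<bar> * n x) \<and> (\<forall>x y. n (x + y) \<le> n x + n y)"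

text \<open>Dual norm (dual space identified with the space via the inner product).\<close>
definition dual_norm :: "('a::real_inner \<Rightarrow> real) \<Rightarrow> 'a \<Rightarrow> real" where
  "dual_norm n g = Sup {inner g x | x. n x \<le> 1}"

definition strongly_convex_wrt ::
  "'a::real_vector set \<Rightarrow> ('a \<Rightarrow> real) \<Rightarrow> ('a \<Rightarrow> real) \<Rightarrow> real \<Rightarrow> bool" where
  "strongly_convex_wrt S n \<phi> m \<longleftrightarrow> (\<forall>x\<in>S. \<forall>y\<in>S. \<forall>t. 0 \<le> t \<and> t \<le> 1 \<longrightarrow>
      \<phi> ((1 - t) *\<^sub>R x + t *\<^sub>R y) \<le> (1 - t) * \<phi> x + t * \<phi> y - m / 2 * t * (1 - t) * (n (x - y))\<^sup>2)"

definition fconj :: "('a::real_inner \<Rightarrow> real) \<Rightarrow> 'a \<Rightarrow> ereal" where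
  "fconj f y = (SUP x. ereal (inner x y - f x))"

definition fdom :: "('a::real_inner \<Rightarrow> real) \<Rightarrow> 'a set" where
  "fdom f = {y. fconj f y < \<infinity>}"

definition fstar :: "('a::real_inner \<Rightarrow> real) \<Rightarrow> 'a \<Rightarrow> real" where
  "fstar f y = real_of_ereal (fconj f y)"

definition is_subgrad :: "('a::real_inner \<Rightarrow> real) \<Rightarrow> 'a set \<Rightarrow> 'a \<Rightarrow> 'a \<Rightarrow> bool" where
  "is_subgrad \<phi> S v g \<longleftrightarrow> v \<in> S \<and> (\<forall>y\<in>S. \<phi> y \<ge> \<phi> v + inner g (y - v))"

definition bregman :: "('a::real_inner \<Rightarrow> real) \<Rightarrow> 'a \<Rightarrow> 'a \<Rightarrow> 'a \<Rightarrow> real" where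
  "bregman \<phi> g v y = \<phi> y - \<phi> v - inner g (y - v)"

end

theory Submission imports Defs begin


lemma convex_tangent:
  fixes f :: "'a::real_normed_vector \<Rightarrow> real"
  assumes cf: "convex_on UNIV f" and df: "(f has_derivative D) (at z)"
  shows "f z + D (x - z) \<le> f x"
proof -
  interpret D: bounded_linear D using df by (rule has_derivative_bounded_linear)
  define g where "g = (\<lambda>t::real. f (z + t *\<^sub>R (x - z)))"
  have "((\<lambda>t. z + t *\<^sub>R (x - z)) has_derivative (\<lambda>t. t *\<^sub>R (x-z))) (at 0)"
    by (auto intro!: derivative_eq_intros)
  from diff_chain_at[OF this] df
  have "(((f \<circ> (\<lambda>t. z + t *\<^sub>R (x - z)))) has_derivative (D \<circ> (\<lambda>t. t *\<^sub>R (x-z)))) (at 0)" by simp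
  hence "(g has_derivative (\<lambda>t. t * D (x - z))) (at 0)"
    by (simp add: g_def o_def D.scaleR)
  hence "(g has_real_derivative D (x - z)) (at 0)"
    unfolding has_field_derivative_def by (metis (no_types, lifting) ext mult.commute)
  hence lim: "((\<lambda>h. (g (0 + h) - g 0) / h) \<longlongrightarrow> D (x - z)) (at 0)"
    by (simp add: DERIV_def)
  hence lim2: "((\<lambda>h. (g (0 + h) - g 0) / h) \<longlongrightarrow> D (x - z)) (at_right 0)"
    using filterlim_at_split by blast
  have ev: "eventually (\<lambda>h. (g (0 + h) - g 0) / h \<le> f x - f z) (at_right 0)"
    unfolding eventually_at_right[of 0 "1::real", simplified]
  proof (intro exI[of _ 1] conjI allI impI)
    fix h :: real assume h: "0 < h" "h < 1"
    have "g h = f ((1 - h) *\<^sub>R z + h *\<^sub>R x)" by (simp add: g_def algebra_simps)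
    also have "\<dots> \<le> (1 - h) * f z + h * f x" using convex_onD[OF cf, of h z x] h by simp
    finally have "g h - g 0 \<le> h * (f x - f z)" by (simp add: g_def algebra_simps)
    thus "(g (0 + h) - g 0) / h \<le> f x - f z" using h by (simp add: divide_simps mult.commute)
  qed simp
  have "D (x - z) \<le> f x - f z"
    by (rule tendsto_upperbound[OF lim2 ev]) simp
  thus ?thesis by simp
qed


lemma norm_props:
  assumes "is_norm n"
  shows "\<And>x. n x \<ge> 0" "\<And>x. n x = 0 \<longleftrightarrow> x = 0" "\<And>c x. n (c *\<^sub>R x) = \<bar>c\<bar> * n x"
    "\<And>x y. n (x + y) \<le> n x + n y"
  using assms unfolding is_norm_def by auto

lemma norm_zero: assumes "is_norm n" shows "n 0 = 0"
  using assms unfolding is_norm_def by auto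

lemma norm_sym:
  assumes "is_norm n" shows "n (x - y) = n (y - x)"
  using norm_props(3)[OF assms, of "-1" "x - y"] by simp

lemma norm_convex:
  assumes "is_norm n" shows "convex_on UNIV n"
proof (rule convex_onI)
  fix t :: real and x y assume t: "0 < t" "t < 1"
  have "n ((1 - t) *\<^sub>R x + t *\<^sub>R y) \<le> n ((1 - t) *\<^sub>R x) + n (t *\<^sub>R y)"
    using norm_props(4)[OF assms] by blast
  also have "\<dots> = (1 - t) * n x + t * n y"
    using norm_props(3)[OF assms] t by simp
  finally show "n ((1 - t) *\<^sub>R x + t *\<^sub>R y) \<le> (1 - t) * n x + t * n y" .
qed simp

lemma norm_lower:
  fixes n :: "'a::euclidean_space \<Rightarrow> real"
  assumes "is_norm n" shows "\<exists>c>0. \<forall>x. c * norm x \<le> n x"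
proof -
  have cont: "continuous_on (sphere 0 1) n"
    using convex_on_continuous[OF open_UNIV norm_convex[OF assms]] continuous_on_subset by blast
  obtain b :: 'a where b: "b \<in> Basis" using nonempty_Basis by blast
  hence "b \<in> sphere 0 1" by simp
  hence ne: "sphere (0::'a) 1 \<noteq> {}" by blast
  obtain x0 where x0: "x0 \<in> sphere 0 1" "\<And>y. y \<in> sphere 0 1 \<Longrightarrow> n x0 \<le> n y"
    using continuous_attains_inf[OF compact_sphere ne cont] by blast
  have "x0 \<noteq> 0" using x0(1) by auto
  hence pos: "n x0 > 0" using norm_props(1,2)[OF assms] by (metis less_eq_real_def)
  show ?thesis
  proof (intro exI[of _ "n x0"] conjI allI pos)
    fix x :: 'a
    show "n x0 * norm x \<le> n x"
    proof (cases "x = 0")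
      case True thus ?thesis using norm_zero[OF assms] by simp
    next
      case False
      have "(1 / norm x) *\<^sub>R x \<in> sphere 0 1" using False by simp
      hence "n x0 \<le> n ((1 / norm x) *\<^sub>R x)" by (rule x0(2))
      also have "\<dots> = n x / norm x" using norm_props(3)[OF assms] by simp
      finally show ?thesis using False by (simp add: field_simps)
    qed
  qed
qed

lemma dual_norm_bound:
  fixes n :: "'a::euclidean_space \<Rightarrow> real"
  assumes "is_norm n" shows "inner g x \<le> dual_norm n g * n x"
proof -
  obtain c where c: "c > 0" "\<And>x. c * norm x \<le> n x" using norm_lower[OF assms] by blast
  have bdd: "bdd_above {inner g x | x. n x \<le> 1}"
  proof (rule bdd_aboveI)
    fix r assume "r \<in> {inner g x | x. n x \<le> 1}"
    then obtain x where x: "r = inner g x" "n x \<le> 1" by blast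
    have "c * norm x \<le> 1" using c(2)[of x] x(2) by linarith
    hence nx: "norm x \<le> 1 / c" using c(1) by (simp add: field_simps)
    have "r \<le> norm g * norm x" using x(1) norm_cauchy_schwarz by simp
    also have "\<dots> \<le> norm g * (1 / c)" using nx by (intro mult_left_mono) auto
    finally show "r \<le> norm g / c" by simp
  qed
  show ?thesis
  proof (cases "x = 0")
    case True thus ?thesis using norm_zero[OF assms] by simp
  next
    case False
    hence nx: "n x > 0" using norm_props(1,2)[OF assms] by (metis less_eq_real_def)
    have "n ((1 / n x) *\<^sub>R x) = 1" using norm_props(3)[OF assms] nx by simp
    hence "inner g ((1 / n x) *\<^sub>R x) \<le> dual_norm n g"
      unfolding dual_norm_def by (intro cSup_upper[OF _ bdd]) (metis (mono_tags, lifting) mem_Collect_eq order_refl)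
    hence "inner g x / n x \<le> dual_norm n g" by simp
    thus ?thesis using nx by (simp add: field_simps)
  qed
qed

lemma norm_sum_le:
  assumes "is_norm n" shows "n (sum u I) \<le> (\<Sum>i\<in>I. n (u i))"
proof (induction I rule: infinite_finite_induct)
  case (infinite A) thus ?case using norm_zero[OF assms] by simp
next
  case empty thus ?case using norm_zero[OF assms] by simp
next
  case (insert i F)
  thus ?case using norm_props(4)[OF assms, of "u i" "sum u F"] by simp
qed


lemma line_deriv:
  fixes f :: "'a::real_inner \<Rightarrow> real"
  assumes fg: "\<And>u. (f has_derivative (\<lambda>d. inner (gf u) d)) (at u)"
  shows "((\<lambda>t. f (a + t *\<^sub>R u)) has_real_derivative inner (gf (a + t *\<^sub>R u)) u) (at t)"
proof -
  have "((\<lambda>s. a + s *\<^sub>R u) has_derivative (\<lambda>s. s *\<^sub>R u)) (at t)"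
    by (auto intro!: derivative_eq_intros)
  from diff_chain_at[OF this fg]
  have "((\<lambda>s. f (a + s *\<^sub>R u)) has_derivative (\<lambda>s. s * inner (gf (a + t *\<^sub>R u)) u)) (at t)"
    by (simp add: o_def)
  moreover have "(\<lambda>s. s * inner (gf (a + t *\<^sub>R u)) u) = (*) (inner (gf (a + t *\<^sub>R u)) u)"
    by (rule ext) (simp add: mult.commute)
  ultimately show ?thesis unfolding has_field_derivative_def by simp
qed

lemma descent:
  fixes f :: "'a::euclidean_space \<Rightarrow> real" and n :: "'a \<Rightarrow> real"
  assumes nX: "is_norm n"
    and fg: "\<And>u. (f has_derivative (\<lambda>d. inner (gf u) d)) (at u)"
    and lip: "\<And>u v. dual_norm n (gf u - gf v) \<le> L * n (u - v)" and L: "L \<ge> 0"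
  shows "f (a + u) \<le> f a + inner (gf a) u + L / 2 * (n u)\<^sup>2"
proof -
  define \<psi> where "\<psi> = (\<lambda>t::real. f (a + t *\<^sub>R u) - f a - t * inner (gf a) u - L / 2 * t\<^sup>2 * (n u)\<^sup>2)"
  have "\<psi> 0 \<ge> \<psi> 1"
  proof (rule DERIV_nonpos_imp_nonincreasing[of 0 1 \<psi>])
    fix t :: real assume t: "0 \<le> t" "t \<le> 1"
    have d: "(\<psi> has_real_derivative (inner (gf (a + t *\<^sub>R u)) u - inner (gf a) u - L * t * (n u)\<^sup>2)) (at t)"
      unfolding \<psi>_def
      by (rule derivative_eq_intros line_deriv[OF fg] refl | simp)+
    have "inner (gf (a + t *\<^sub>R u)) u - inner (gf a) u = inner (gf (a + t *\<^sub>R u) - gf a) u"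
      by (simp add: inner_diff_left)
    also have "\<dots> \<le> dual_norm n (gf (a + t *\<^sub>R u) - gf a) * n u"
      by (rule dual_norm_bound[OF nX])
    also have "\<dots> \<le> (L * n (t *\<^sub>R u)) * n u"
      using lip[of "a + t *\<^sub>R u" a] norm_props(1)[OF nX, of u] by (intro mult_right_mono) auto
    also have "\<dots> = L * t * (n u)\<^sup>2"
      using norm_props(3)[OF nX] t by (simp add: power2_eq_square)
    finally show "\<exists>y. (\<psi> has_real_derivative y) (at t) \<and> y \<le> 0"
      using d by (intro exI[of _ "inner (gf (a + t *\<^sub>R u)) u - inner (gf a) u - L * t * (n u)\<^sup>2"]) auto
  qed simp
  thus ?thesis unfolding \<psi>_def by simp
qed

lemma fconj_gt: "fconj f y \<ge> ereal (inner z y - f z)"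
  unfolding fconj_def by (rule SUP_upper) simp

lemma fdom_eq:
  assumes "y \<in> fdom f" shows "fconj f y = ereal (fstar f y)"
proof -
  have "fconj f y \<noteq> -\<infinity>" using fconj_gt[of "0" y f] by auto
  moreover have "fconj f y \<noteq> \<infinity>" using assms unfolding fdom_def by auto
  ultimately show ?thesis unfolding fstar_def by (cases "fconj f y") auto
qed

lemma fenchel_young:
  assumes "y \<in> fdom f" shows "inner z y - f z \<le> fstar f y"
  using fconj_gt[of z y f] fdom_eq[OF assms] by simp

lemma fconj_grad:
  fixes f :: "'a::real_inner \<Rightarrow> real"
  assumes cf: "convex_on UNIV f" and fg: "\<And>u. (f has_derivative (\<lambda>d. inner (gf u) d)) (at u)"
  shows "gf z \<in> fdom f" "fstar f (gf z) = inner z (gf z) - f z"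
proof -
  have "fconj f (gf z) = ereal (inner z (gf z) - f z)"
  proof (rule antisym)
    show "fconj f (gf z) \<le> ereal (inner z (gf z) - f z)"
      unfolding fconj_def
    proof (rule SUP_least)
      fix x
      have "f z + inner (gf z) (x - z) \<le> f x" by (rule convex_tangent[OF cf fg])
      thus "ereal (inner x (gf z) - f x) \<le> ereal (inner z (gf z) - f z)"
        by (simp add: inner_diff_right inner_commute)
    qed
    show "ereal (inner z (gf z) - f z) \<le> fconj f (gf z)" by (rule fconj_gt)
  qed
  thus "gf z \<in> fdom f" "fstar f (gf z) = inner z (gf z) - f z"
    unfolding fdom_def fstar_def by auto
qed

lemma key_bregman:
  fixes f :: "'a::euclidean_space \<Rightarrow> real" and n :: "'a \<Rightarrow> real"
  assumes nX: "is_norm n" and cf: "convex_on UNIV f"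
    and fg: "\<And>u. (f has_derivative (\<lambda>d. inner (gf u) d)) (at u)"
    and lip: "\<And>u v. dual_norm n (gf u - gf v) \<le> L * n (u - v)" and L: "L \<ge> 0"
    and sg: "is_subgrad (fstar f) (fdom f) v g" and w: "w \<in> fdom f"
  shows "bregman (fstar f) g v w \<ge> inner u (w - v) - L / 2 * (n u)\<^sup>2"
proof -
  have v: "v \<in> fdom f" and sgi: "\<And>w. w \<in> fdom f \<Longrightarrow> fstar f w \<ge> fstar f v + inner g (w - v)"
    using sg unfolding is_subgrad_def by auto
  have "fstar f (gf g) \<ge> fstar f v + inner g (gf g - v)"
    by (rule sgi[OF fconj_grad(1)[OF cf fg]])
  hence le: "fstar f v \<le> inner g v - f g"
    using fconj_grad(2)[OF cf fg, of g] by (simp add: inner_diff_right inner_commute)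
  have maxg: "inner z v - f z \<le> inner g v - f g" for z
    using fenchel_young[OF v, of z] le by linarith
  have "(\<lambda>h. inner (gf g) h - inner v h) = (\<lambda>h. 0)"
  proof (rule has_derivative_local_min[where f = "\<lambda>z. f z - inner z v" and x = g])
    show "((\<lambda>z. f z - inner z v) has_derivative (\<lambda>h. inner (gf g) h - inner v h)) (at g)"
      using fg[of g] by (auto intro!: derivative_eq_intros simp: inner_commute)
    show "eventually (\<lambda>y. f g - inner g v \<le> f y - inner y v) (at g)"
      using maxg by (intro always_eventually) (smt (verit))
  qed
  hence "inner (gf g) (gf g - v) - inner v (gf g - v) = 0" by metis
  hence "inner (gf g - v) (gf g - v) = 0" by (simp add: inner_diff_left)
  hence gv: "gf g = v" by simp
  have "fstar f w \<ge> inner (g + u) w - f (g + u)" by (rule fenchel_young[OF w])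
  moreover have "f (g + u) \<le> f g + inner v u + L / 2 * (n u)\<^sup>2"
    using descent[OF nX fg lip L, of g u] gv by simp
  moreover have "fstar f v = inner g v - f g" using le fenchel_young[OF v, of g] by linarith
  moreover have "inner (g + u) w = inner g w + inner u w" by (simp add: inner_add_left)
  ultimately show ?thesis unfolding bregman_def
    by (simp add: inner_diff_right inner_commute)
qed

lemma strong_bregman:
  fixes \<phi> :: "'a::real_inner \<Rightarrow> real"
  assumes sc: "strongly_convex_wrt S n \<phi> 1" and S: "convex S"
    and sg: "is_subgrad \<phi> S x g" and y: "y \<in> S"
  shows "bregman \<phi> g x y \<ge> 1 / 2 * (n (x - y))\<^sup>2"
proof -
  have x: "x \<in> S" using sg unfolding is_subgrad_def by auto
  define D where "D = bregman \<phi> g x y"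
  define m where "m = (n (x - y))\<^sup>2"
  have m0: "m \<ge> 0" unfolding m_def by simp
  have H: "D \<ge> (1 - t) / 2 * m" if t: "0 < t" "t \<le> 1" for t :: real
  proof -
    have pt: "(1 - t) *\<^sub>R x + t *\<^sub>R y \<in> S" using S x y t by (simp add: convexD)
    have "\<phi> ((1 - t) *\<^sub>R x + t *\<^sub>R y) \<ge> \<phi> x + inner g ((1 - t) *\<^sub>R x + t *\<^sub>R y - x)"
      using sg pt unfolding is_subgrad_def by blast
    moreover have "(1 - t) *\<^sub>R x + t *\<^sub>R y - x = t *\<^sub>R (y - x)" by (simp add: algebra_simps)
    moreover have "\<phi> ((1 - t) *\<^sub>R x + t *\<^sub>R y) \<le> (1 - t) * \<phi> x + t * \<phi> y - 1 / 2 * t * (1 - t) * m"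
      using sc x y t unfolding strongly_convex_wrt_def m_def by auto
    ultimately have "t * inner g (y - x) \<le> t * (\<phi> y - \<phi> x) - t * ((1 - t) / 2 * m)"
      by (simp add: algebra_simps)
    hence "t * ((1 - t) / 2 * m) \<le> t * D" unfolding D_def bregman_def by (simp add: algebra_simps)
    thus ?thesis using t by simp
  qed
  have D0: "D \<ge> 0" using H[of 1] by simp
  show ?thesis
  proof (rule ccontr)
    assume "\<not> ?thesis"
    hence lt: "D < m / 2" unfolding D_def m_def by simp
    define t where "t = (m / 2 - D) / m"
    have mpos: "m > 0" using lt D0 by linarith
    have t: "0 < t" "t \<le> 1" unfolding t_def using lt D0 mpos by (auto simp: field_simps)
    have "(1 - t) / 2 * m = m / 4 + D / 2" unfolding t_def using mpos by (simp add: field_simps)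
    hence "(1 - t) / 2 * m > D" using lt by linarith
    with H[OF t] show False by linarith
  qed
qed

theorem lemma5p2:
  fixes nX :: "'a::euclidean_space \<Rightarrow> real" and nZ :: "'b::euclidean_space \<Rightarrow> real"
    and Xs :: "'a set" and Zs :: "'b set" and Aop :: "'a \<Rightarrow> 'b" and h :: "'b \<Rightarrow> real"
    and \<mu> :: real and \<nu> :: "'a \<Rightarrow> real" and f :: "'a \<Rightarrow> real" and gf :: "'a \<Rightarrow> 'a"
    and L :: real and \<zeta> :: "'b \<Rightarrow> real"
    and lam \<tau> \<beta> p :: "nat \<Rightarrow> real" and \<alpha> q \<eta> :: "nat \<Rightarrow> nat \<Rightarrow> real" and T :: "nat \<Rightarrow> nat"
    and N :: nat
    and xs xh xt ys gy gxo :: "nat \<Rightarrow> 'a" and zs :: "nat \<Rightarrow> 'b"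
    and xin gx :: "nat \<Rightarrow> nat \<Rightarrow> 'a" and zin gz :: "nat \<Rightarrow> nat \<Rightarrow> 'b"
    and x y :: 'a
  assumes nX: "is_norm nX" and nZ: "is_norm nZ"
    and Xs: "closed Xs" "convex Xs" and Zs: "closed Zs" "convex Zs"
    and Aop: "linear Aop" and h: "convex_on Zs h" and mu: "\<mu> \<ge> 0"
    and nu: "strongly_convex_wrt Xs nX \<nu> 1"
    and f_convex: "convex_on UNIV f"
    and f_grad: "\<And>u. (f has_derivative (\<lambda>d. inner (gf u) d)) (at u)"
    and L: "L \<ge> 0" and f_lip: "\<And>u v. dual_norm nX (gf u - gf v) \<le> L * nX (u - v)"
    and zeta: "strongly_convex_wrt Zs nZ \<zeta> 1"
    \<comment> \<open>parameters\<close>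
    and lam_nn: "\<And>k. lam k \<ge> 0" and tau_nn: "\<And>k. \<tau> k \<ge> 0"
    and beta_pos: "\<And>k. \<beta> k > 0" and p_pos: "\<And>k. p k > 0"
    and q_pos: "\<And>k t. q k t > 0" and eta_pos: "\<And>k t. \<eta> k t > 0" and T_pos: "\<And>k. T k > 0"
    and tau1: "\<tau> 1 = 0"
    and c1: "\<And>k. 2 \<le> k \<Longrightarrow> k \<le> N \<Longrightarrow> \<beta> k * \<tau> k \<le> \<beta> (k - 1) * (\<tau> (k - 1) + 1)"
    and c2: "\<And>k. 2 \<le> k \<Longrightarrow> k \<le> N \<Longrightarrow> \<beta> (k - 1) = \<beta> k * lam k"
    and c3: "\<And>k. 2 \<le> k \<Longrightarrow> k \<le> N \<Longrightarrow> L * lam k \<le> p (k - 1) * \<tau> k"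
    \<comment> \<open>initialization (x_{-1} = x_0 is encoded by xs (k - 2) = xs 0 for k = 1)\<close>
    and init: "xs 0 \<in> Xs" "ys 0 \<in> fdom f" "zs 0 \<in> Zs" "xh 0 = xs 0"
    and gy0: "is_subgrad (fstar f) (fdom f) (ys 0) (gy 0)"
    \<comment> \<open>outer iterations k = 1..N\<close>
    and xt_def: "\<And>k. 1 \<le> k \<Longrightarrow> k \<le> N \<Longrightarrow>
        xt k = xs (k - 1) + lam k *\<^sub>R (xh (k - 1) - xs (k - 2))"
    and y_step: "\<And>k. 1 \<le> k \<Longrightarrow> k \<le> N \<Longrightarrow>
        is_arg_min (\<lambda>v. - inner (xt k) v + fstar f v + \<tau> k * bregman (fstar f) (gy (k - 1)) (ys (k - 1)) v)
          (\<lambda>v. v \<in> fdom f) (ys k)"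
    and gy_step: "\<And>k. 1 \<le> k \<Longrightarrow> k \<le> N \<Longrightarrow>
        gy k = (1 / (1 + \<tau> k)) *\<^sub>R (xt k + \<tau> k *\<^sub>R gy (k - 1))"
    and xin0: "\<And>k. 1 \<le> k \<Longrightarrow> k \<le> N \<Longrightarrow> xin k 0 = xs (k - 1)"
    and zin0: "\<And>k. 1 \<le> k \<Longrightarrow> k \<le> N \<Longrightarrow> zin k 0 = zs (k - 1)"
    and gxo: "\<And>k. 1 \<le> k \<Longrightarrow> k \<le> N \<Longrightarrow> is_subgrad \<nu> Xs (xs (k - 1)) (gxo k)"
    and gx: "\<And>k t. 1 \<le> k \<Longrightarrow> k \<le> N \<Longrightarrow> t < T k \<Longrightarrow> is_subgrad \<nu> Xs (xin k t) (gx k t)"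
    and gz: "\<And>k t. 1 \<le> k \<Longrightarrow> k \<le> N \<Longrightarrow> t < T k \<Longrightarrow> is_subgrad \<zeta> Zs (zin k t) (gz k t)"
    and z_step: "\<And>k t. 1 \<le> k \<Longrightarrow> k \<le> N \<Longrightarrow> 1 \<le> t \<Longrightarrow> t \<le> T k \<Longrightarrow>
        is_arg_min (\<lambda>w. h w - inner (Aop (xin k (t - 1) + \<alpha> k t *\<^sub>R (xin k (t - 1) -
              (if t = 1 then (if k = 1 then xs 0 else xin (k - 1) (T (k - 1) - 1)) else xin k (t - 2))))) w
            + q k t * bregman \<zeta> (gz k (t - 1)) (zin k (t - 1)) w)
          (\<lambda>w. w \<in> Zs) (zin k t)"
    and x_step: "\<And>k t. 1 \<le> k \<Longrightarrow> k \<le> N \<Longrightarrow> 1 \<le> t \<Longrightarrow> t \<le> T k \<Longrightarrow>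
        is_arg_min (\<lambda>u. \<mu> * \<nu> u + inner (ys k + adjoint Aop (zin k t)) u
            + \<eta> k t * bregman \<nu> (gx k (t - 1)) (xin k (t - 1)) u + p k * bregman \<nu> (gxo k) (xs (k - 1)) u)
          (\<lambda>u. u \<in> Xs) (xin k t)"
    and xs_def: "\<And>k. 1 \<le> k \<Longrightarrow> k \<le> N \<Longrightarrow> xs k = xin k (T k)"
    and zs_def: "\<And>k. 1 \<le> k \<Longrightarrow> k \<le> N \<Longrightarrow> zs k = zin k (T k)"
    and xh_def: "\<And>k. 1 \<le> k \<Longrightarrow> k \<le> N \<Longrightarrow> xh k = (1 / real (T k)) *\<^sub>R (\<Sum>t = 1..T k. xin k t)"
    and N: "N \<ge> 1"
    and x: "x \<in> Xs" and y: "y \<in> fdom f"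
  shows "(\<Sum>k = 1..N. \<beta> k * (- inner (xh k) y + inner x (ys k) + inner (ys k) (xh k - x)
            - fstar f (ys k) + fstar f y
            + p k / real (T k) * (\<Sum>t = 1..T k. bregman \<nu> (gxo k) (xs (k - 1)) (xin k t))))
         \<ge> - \<beta> N * inner (xs (N - 1) - xh N) (ys N - y) + \<beta> N * p N / 2 * (nX (xs (N - 1) - xh N))\<^sup>2
           + \<beta> N * (\<tau> N + 1) * bregman (fstar f) (gy N) (ys N) y"
proof -
  define W where "W = (\<lambda>k v. bregman (fstar f) (gy k) (ys k) v)"
  define P where "P = (\<lambda>k. p k / real (T k) * (\<Sum>t = 1..T k. bregman \<nu> (gxo k) (xs (k - 1)) (xin k t)))"
  define S where "S = (\<lambda>k. - inner (xh k) y + inner x (ys k) + inner (ys k) (xh k - x)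
            - fstar f (ys k) + fstar f y + P k)"
  have ys_dom: "ys k \<in> fdom f" if "k \<le> N" for k
  proof (cases "k = 0")
    case True thus ?thesis using init by simp
  next
    case False thus ?thesis using y_step[of k] that unfolding is_arg_min_def by auto
  qed
  have ident: "- inner (xt k) (ys k) + fstar f (ys k) + \<tau> k * W (k - 1) (ys k) + (1 + \<tau> k) * W k v
      = - inner (xt k) v + fstar f v + \<tau> k * W (k - 1) v" if k: "1 \<le> k" "k \<le> N" for k v
  proof -
    have tp: "1 + \<tau> k > 0" using tau_nn[of k] by linarith
    have "(1 + \<tau> k) *\<^sub>R gy k = xt k + \<tau> k *\<^sub>R gy (k - 1)"
      using gy_step[OF k] tp by simp
    hence gi: "(1 + \<tau> k) * inner (gy k) d = inner (xt k) d + \<tau> k * inner (gy (k - 1)) d" for d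
      by (metis inner_add_left inner_scaleR_left)
    show ?thesis unfolding W_def bregman_def
      using gi[of "v - ys k"] by (simp add: algebra_simps inner_diff_right)
  qed
  have sg: "is_subgrad (fstar f) (fdom f) (ys k) (gy k)" if "k \<le> N" for k
  proof (cases "k = 0")
    case True thus ?thesis using gy0 by simp
  next
    case False
    hence k: "1 \<le> k" "k \<le> N" using that by auto
    have tp: "1 + \<tau> k > 0" using tau_nn[of k] by linarith
    show ?thesis unfolding is_subgrad_def
    proof (intro conjI ballI)
      show "ys k \<in> fdom f" using ys_dom[OF k(2)] .
      fix v assume v: "v \<in> fdom f"
      have "\<not> (- inner (xt k) v + fstar f v + \<tau> k * W (k - 1) v
           < - inner (xt k) (ys k) + fstar f (ys k) + \<tau> k * W (k - 1) (ys k))"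
        using y_step[OF k] v unfolding is_arg_min_def W_def by auto
      hence "(1 + \<tau> k) * W k v \<ge> 0" using ident[OF k, of v] by linarith
      hence "W k v \<ge> 0" using tp by (simp add: zero_le_mult_iff)
      thus "fstar f (ys k) + inner (gy k) (v - ys k) \<le> fstar f v" unfolding W_def bregman_def by simp
    qed
  qed
  have Wnn: "W k v \<ge> 0" if "k \<le> N" "v \<in> fdom f" for k v
    using sg[OF that(1)] that(2) unfolding W_def bregman_def is_subgrad_def by auto
  have xs_in: "xs j \<in> Xs" if "j \<le> N" for j
  proof (cases "j = 0")
    case True thus ?thesis using init by simp
  next
    case False
    hence "1 \<le> j" "1 \<le> T j" using T_pos[of j] by auto
    thus ?thesis using x_step[of j "T j"] xs_def[of j] that unfolding is_arg_min_def by auto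
  qed
  have xin_in: "xin k t \<in> Xs" if "1 \<le> k" "k \<le> N" "1 \<le> t" "t \<le> T k" for k t
    using x_step[OF that] unfolding is_arg_min_def by auto
  have Pb: "P k \<ge> p k / 2 * (nX (xh k - xs (k - 1)))\<^sup>2" if k: "1 \<le> k" "k \<le> N" for k
  proof -
    define a where "a = (\<lambda>t. nX (xin k t - xs (k - 1)))"
    have Tp: "real (T k) > 0" using T_pos[of k] by simp
    have V: "bregman \<nu> (gxo k) (xs (k - 1)) (xin k t) \<ge> 1 / 2 * (a t)\<^sup>2" if "t \<in> {1..T k}" for t
      using strong_bregman[OF nu Xs(2) gxo[OF k] xin_in[OF k, of t]] that
      unfolding a_def by (simp add: norm_sym[OF nX])
    have s1: "(\<Sum>t = 1..T k. bregman \<nu> (gxo k) (xs (k - 1)) (xin k t)) \<ge> (\<Sum>t = 1..T k. 1 / 2 * (a t)\<^sup>2)"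
      by (rule sum_mono) (rule V)
    have "xh k - xs (k - 1) = (1 / real (T k)) *\<^sub>R (\<Sum>t = 1..T k. xin k t - xs (k - 1))"
      using xh_def[OF k] Tp by (simp add: sum_subtractf scaleR_diff_right sum_constant_scaleR)
    hence "nX (xh k - xs (k - 1)) = (1 / real (T k)) * nX (\<Sum>t = 1..T k. xin k t - xs (k - 1))"
      using norm_props(3)[OF nX] Tp by simp
    also have "\<dots> \<le> (1 / real (T k)) * (\<Sum>t = 1..T k. a t)"
      unfolding a_def using Tp by (intro mult_left_mono norm_sum_le[OF nX]) auto
    finally have n1: "nX (xh k - xs (k - 1)) \<le> (\<Sum>t = 1..T k. a t) / real (T k)" by simp
    have "(nX (xh k - xs (k - 1)))\<^sup>2 \<le> ((\<Sum>t = 1..T k. a t) / real (T k))\<^sup>2"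
      using n1 norm_props(1)[OF nX] by (intro power_mono) auto
    also have "\<dots> = (\<Sum>t = 1..T k. a t)\<^sup>2 / (real (T k))\<^sup>2" by (simp add: power_divide)
    also have "\<dots> \<le> ((\<Sum>t = 1..T k. (a t)\<^sup>2) * real (T k)) / (real (T k))\<^sup>2"
      using sum_squared_le_sum_of_squares[of a "{1..T k}"] by (intro divide_right_mono) auto
    also have "\<dots> = (\<Sum>t = 1..T k. (a t)\<^sup>2) / real (T k)" using Tp by (simp add: power2_eq_square)
    finally have n2: "(nX (xh k - xs (k - 1)))\<^sup>2 \<le> (\<Sum>t = 1..T k. (a t)\<^sup>2) / real (T k)" .
    have "p k / 2 * (nX (xh k - xs (k - 1)))\<^sup>2 \<le> p k / 2 * ((\<Sum>t = 1..T k. (a t)\<^sup>2) / real (T k))"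
      using n2 p_pos[of k] by (intro mult_left_mono) auto
    also have "\<dots> = p k / real (T k) * (\<Sum>t = 1..T k. 1 / 2 * (a t)\<^sup>2)"
      by (simp add: sum_divide_distrib[symmetric])
    also have "\<dots> \<le> P k" unfolding P_def using s1 p_pos[of k] Tp by (intro mult_left_mono) auto
    finally show ?thesis .
  qed
  have Seq: "S k = inner (xh k - xt k) (ys k - y) + \<tau> k * W (k - 1) (ys k) + (1 + \<tau> k) * W k y
      - \<tau> k * W (k - 1) y + P k" if k: "1 \<le> k" "k \<le> N" for k
    using ident[OF k, of y] unfolding S_def
    by (simp add: inner_diff_left inner_diff_right inner_commute algebra_simps)
  have main: "n \<le> N \<longrightarrow> (\<Sum>k = 1..n. \<beta> k * S k) \<ge> \<beta> n * inner (xh n - xs (n - 1)) (ys n - y)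
      + \<beta> n * p n / 2 * (nX (xh n - xs (n - 1)))\<^sup>2 + \<beta> n * (\<tau> n + 1) * W n y" if "1 \<le> n" for n
    using that
  proof (induct n rule: nat_induct_at_least)
    case base
    show ?case
    proof
      assume "1 \<le> N"
      have xt1: "xt 1 = xs 0" using xt_def[of 1] N init by simp
      have "S 1 \<ge> inner (xh 1 - xs 0) (ys 1 - y) + W 1 y + p 1 / 2 * (nX (xh 1 - xs 0))\<^sup>2"
        using Seq[of 1] N Pb[of 1] tau1 xt1 by simp
      thus "(\<Sum>k = 1..1. \<beta> k * S k) \<ge> \<beta> 1 * inner (xh 1 - xs (1 - 1)) (ys 1 - y)
      + \<beta> 1 * p 1 / 2 * (nX (xh 1 - xs (1 - 1)))\<^sup>2 + \<beta> 1 * (\<tau> 1 + 1) * W 1 y"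
      proof -
        have "\<beta> 1 * S 1 \<ge> \<beta> 1 * (inner (xh 1 - xs 0) (ys 1 - y) + W 1 y + p 1 / 2 * (nX (xh 1 - xs 0))\<^sup>2)"
          using beta_pos[of 1] \<open>S 1 \<ge> _\<close> by (intro mult_left_mono) auto
        thus ?thesis using tau1 by (simp add: algebra_simps)
      qed
    qed
  next
    case (Suc n)
    show ?case
    proof
      assume SN: "Suc n \<le> N"
      define k where "k = Suc n"
      have k: "1 \<le> k" "k \<le> N" "2 \<le> k" using SN Suc(1) unfolding k_def by auto
      have km: "k - 1 = n" "k - 2 = n - 1" unfolding k_def by auto
      have IH: "(\<Sum>k = 1..n. \<beta> k * S k) \<ge> \<beta> n * inner (xh n - xs (n - 1)) (ys n - y)
         + \<beta> n * p n / 2 * (nX (xh n - xs (n - 1)))\<^sup>2 + \<beta> n * (\<tau> n + 1) * W n y"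
        using Suc(2) SN by simp
      define u where "u = xh n - xs (n - 1)"
      define lm where "lm = lam k"
      define tk where "tk = \<tau> k"
      define d where "d = inner u (ys k - ys n)"
      have b2: "\<beta> n = \<beta> k * lm" using c2[OF k(3) k(2)] km unfolding lm_def by simp
      have xtk: "xt k = xs n + lm *\<^sub>R u" using xt_def[OF k(1,2)] km unfolding u_def lm_def by simp
      have lmp: "lm > 0" using b2 beta_pos[of n] beta_pos[of k] lam_nn[of k] unfolding lm_def
        by (metis less_eq_real_def mult_zero_right order_less_irrefl)
      have tk0: "tk \<ge> 0" unfolding tk_def by (rule tau_nn)
      have c3k: "L * lm \<le> p n * tk" using c3[OF k(3) k(2)] km unfolding lm_def tk_def by simp
      have c1k: "\<beta> k * tk \<le> \<beta> n * (\<tau> n + 1)" using c1[OF k(3) k(2)] km unfolding tk_def by simp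
      have sgn: "is_subgrad (fstar f) (fdom f) (ys n) (gy n)" using sg SN by simp
      have ysk: "ys k \<in> fdom f" using ys_dom k by simp
      have KB: "W n (ys k) \<ge> s * d - L / 2 * s\<^sup>2 * (nX u)\<^sup>2" if "s \<ge> 0" for s
      proof -
        have "W n (ys k) \<ge> inner (s *\<^sub>R u) (ys k - ys n) - L / 2 * (nX (s *\<^sub>R u))\<^sup>2"
          unfolding W_def by (rule key_bregman[OF nX f_convex f_grad f_lip L sgn ysk])
        thus ?thesis using norm_props(3)[OF nX, of s u] that unfolding d_def
          by (simp add: power_mult_distrib)
      qed
      have key: "\<beta> k * tk * W n (ys k) \<ge> \<beta> n * d - \<beta> n * p n / 2 * (nX u)\<^sup>2"
      proof (cases "tk > 0")
        case True
        have "W n (ys k) \<ge> (lm / tk) * d - L / 2 * (lm / tk)\<^sup>2 * (nX u)\<^sup>2"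
          using KB[of "lm / tk"] lmp True by simp
        hence "tk * W n (ys k) \<ge> lm * d - (L * lm) * lm / (2 * tk) * (nX u)\<^sup>2"
          using True by (simp add: field_simps power2_eq_square)
        moreover have "(L * lm) * lm / (2 * tk) * (nX u)\<^sup>2 \<le> (p n * tk) * lm / (2 * tk) * (nX u)\<^sup>2"
          using c3k lmp True by (intro mult_right_mono divide_right_mono mult_right_mono) auto
        moreover have "(p n * tk) * lm / (2 * tk) * (nX u)\<^sup>2 = lm * p n / 2 * (nX u)\<^sup>2"
          using True by (simp add: field_simps)
        ultimately have "tk * W n (ys k) \<ge> lm * d - lm * p n / 2 * (nX u)\<^sup>2" by linarith
        hence "\<beta> k * (tk * W n (ys k)) \<ge> \<beta> k * (lm * d - lm * p n / 2 * (nX u)\<^sup>2)"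
          using beta_pos[of k] by (intro mult_left_mono) auto
        thus ?thesis using b2 by (simp add: algebra_simps)
      next
        case False
        hence tk00: "tk = 0" using tk0 by simp
        hence "L = 0" using c3k lmp L by (simp add: mult_le_0_iff)
        hence KB0: "W n (ys k) \<ge> s * d" if "s \<ge> 0" for s using KB[OF that] by simp
        have "d \<le> 0"
        proof (rule ccontr)
          assume "\<not> d \<le> 0"
          hence dp: "d > 0" by simp
          have "W n (ys k) \<ge> ((\<bar>W n (ys k)\<bar> + 1) / d) * d"
            using KB0[of "(\<bar>W n (ys k)\<bar> + 1) / d"] dp by simp
          thus False using dp abs_ge_self[of "W n (ys k)"] by simp
        qed
        moreover have "0 \<le> p n * (nX u)\<^sup>2" using p_pos[of n] by simp
        ultimately show ?thesis using tk00 beta_pos[of n]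
          by (simp add: mult_nonpos_nonneg  mult_le_0_iff)
      qed
      have Sk: "S k = inner (xh k - xs n) (ys k - y) - lm * inner u (ys k - y) + tk * W n (ys k)
          + (1 + tk) * W k y - tk * W n y + P k"
        using Seq[OF k(1,2)] km xtk unfolding tk_def
        by (simp add: inner_diff_left inner_add_left algebra_simps)
      have Pk: "P k \<ge> p k / 2 * (nX (xh k - xs n))\<^sup>2" using Pb[OF k(1,2)] km by simp
      have Wy: "(\<beta> n * (\<tau> n + 1) - \<beta> k * tk) * W n y \<ge> 0"
        using c1k Wnn[of n y] SN y by simp
      have du: "inner u (ys k - y) = d + inner u (ys n - y)" unfolding d_def by (simp add: inner_diff_right)
      have sum: "(\<Sum>k = 1..k. \<beta> k * S k) = (\<Sum>k = 1..n. \<beta> k * S k) + \<beta> k * S k"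
        unfolding k_def by simp
      have "\<beta> k * S k = \<beta> k * inner (xh k - xs n) (ys k - y) - \<beta> n * d - \<beta> n * inner u (ys n - y)
          + \<beta> k * tk * W n (ys k) + \<beta> k * (tk + 1) * W k y - \<beta> k * tk * W n y + \<beta> k * P k"
        unfolding Sk du b2 by (simp add: algebra_simps)
      moreover have "\<beta> k * P k \<ge> \<beta> k * (p k / 2 * (nX (xh k - xs n))\<^sup>2)"
        using Pk beta_pos[of k] by (intro mult_left_mono) auto
      ultimately have "(\<Sum>k = 1..k. \<beta> k * S k) \<ge> \<beta> k * inner (xh k - xs (k - 1)) (ys k - y)
        + \<beta> k * p k / 2 * (nX (xh k - xs (k - 1)))\<^sup>2 + \<beta> k * (\<tau> k + 1) * W k y"
        using IH key Wy sum km unfolding u_def tk_def by (simp add: algebra_simps)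
      thus "(\<Sum>k = 1..Suc n. \<beta> k * S k) \<ge> \<beta> (Suc n) * inner (xh (Suc n) - xs (Suc n - 1)) (ys (Suc n) - y)
        + \<beta> (Suc n) * p (Suc n) / 2 * (nX (xh (Suc n) - xs (Suc n - 1)))\<^sup>2 + \<beta> (Suc n) * (\<tau> (Suc n) + 1) * W (Suc n) y"
        unfolding k_def .
    qed
  qed
  have fin: "(\<Sum>k = 1..N. \<beta> k * S k) \<ge> \<beta> N * inner (xh N - xs (N - 1)) (ys N - y)
      + \<beta> N * p N / 2 * (nX (xh N - xs (N - 1)))\<^sup>2 + \<beta> N * (\<tau> N + 1) * W N y"
    using main[OF N] by simp
  have e1: "- \<beta> N * inner (xs (N - 1) - xh N) (ys N - y) = \<beta> N * inner (xh N - xs (N - 1)) (ys N - y)"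
    by (simp add: inner_diff_left algebra_simps)
  have e2: "nX (xs (N - 1) - xh N) = nX (xh N - xs (N - 1))" by (rule norm_sym[OF nX])
  show ?thesis using fin unfolding e1 e2 S_def P_def W_def .
qed

end
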